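(* Let $w\ge 2$ and $n$ be positive integers such that $n\equiv 1\pmod{w-1}$ and $n(n-1)-n(w-1)(w-2)\equiv (2k+1)(w-1)\pmod{w(w-1)}$ for some integer $k\in[0,\frac{w-3}{2}]$. Let $B(n)=\left\lfloor\frac{n(n-1-(w-1)(w-2))}{w(w-1)}\right\rfloor$. If $\mathcal C$ is a balanced $(n,2w-2,w)_3$ code of size $B(n)+n$, then $\mathcal C$ contains a codeword which is neither of type $1^w$ nor of type $1^{w-2}2^1$.
   Context: A ternary code of length $n$ is a subset of $\{0,1,2\}^n$; the $\ell_1$-distance is $\sum_i|u_i-v_i|$ and the $\ell_1$-weight of $u$ is its distance to $0$. An $(n,d,w)_3$ code has all codewords of $\ell_1$-weight $w$ and pairwise $\ell_1$-distance at least $d$. A codeword is of type $1^a2^b$ if exactly $a$ of its coordinates equal $1$ and exactly $b$ equal $2$ (so $a+2b=w$). The support of $u$ is $\{i:u_i\ne0\}$. A code is balanced if the supports of its codewords, viewed as vertex sets of cliques in $K_n$ on $[n]$, form an edge-decomposition of $K_n$. *)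

theory Defs
  imports Complex_Main "HOL-Number_Theory.Cong"
begin

definition ternary_word :: "nat \<Rightarrow> (nat \<Rightarrow> nat) \<Rightarrow> bool" where
  "ternary_word n u \<longleftrightarrow> (\<forall>i<n. u i \<le> 2) \<and> (\<forall>i\<ge>n. u i = 0)"

definition l1_dist :: "nat \<Rightarrow> (nat \<Rightarrow> nat) \<Rightarrow> (nat \<Rightarrow> nat) \<Rightarrow> nat" where
  "l1_dist n u v = (\<Sum>i<n. nat \<bar>int (u i) - int (v i)\<bar>)"

definition l1_weight :: "nat \<Rightarrow> (nat \<Rightarrow> nat) \<Rightarrow> nat" where
  "l1_weight n u = l1_dist n u (\<lambda>_. 0)"

definition supp :: "nat \<Rightarrow> (nat \<Rightarrow> nat) \<Rightarrow> nat set" where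
  "supp n u = {i. i < n \<and> u i \<noteq> 0}"

definition ternary_code :: "nat \<Rightarrow> nat \<Rightarrow> nat \<Rightarrow> (nat \<Rightarrow> nat) set \<Rightarrow> bool" where
  "ternary_code n d w C \<longleftrightarrow>
     (\<forall>u\<in>C. ternary_word n u \<and> l1_weight n u = w) \<and>
     (\<forall>u\<in>C. \<forall>v\<in>C. u \<noteq> v \<longrightarrow> l1_dist n u v \<ge> d)"

text \<open>Balanced: the supports, as cliques of K_n, edge-decompose K_n, i.e. every
edge {i,j} of K_n lies in the support of exactly one codeword.\<close>
definition balanced :: "nat \<Rightarrow> (nat \<Rightarrow> nat) set \<Rightarrow> bool" where
  "balanced n C \<longleftrightarrow>
     (\<forall>i j. i < n \<longrightarrow> j < n \<longrightarrow> i \<noteq> j \<longrightarrow> (\<exists>!u. u \<in> C \<and> {i, j} \<subseteq> supp n u))"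

definition has_type :: "nat \<Rightarrow> nat \<Rightarrow> nat \<Rightarrow> (nat \<Rightarrow> nat) \<Rightarrow> bool" where
  "has_type n a b u \<longleftrightarrow> card {i. i < n \<and> u i = 1} = a \<and> card {i. i < n \<and> u i = 2} = b"

end

theory Submission
  imports Defs
begin

lemma card_offdiag:
  assumes "finite A"
  shows "card {(i,j). i \<in> A \<and> j \<in> A \<and> i \<noteq> j} = card A * (card A - 1)"
proof -
  have eq: "{(i,j). i \<in> A \<and> j \<in> A \<and> i \<noteq> j} = A \<times> A - (\<lambda>x. (x,x)) ` A" by auto
  have sub: "(\<lambda>x. (x,x)) ` A \<subseteq> A \<times> A" by auto
  have ci: "card ((\<lambda>x. (x,x)) ` A) = card A" by (rule card_image) (auto simp: inj_on_def)
  show ?thesis unfolding eq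
    using card_Diff_subset[OF finite_imageI[OF assms] sub] ci assms
    by (simp add: card_cartesian_product diff_mult_distrib2)
qed

lemma count_pairs:
  assumes fin: "finite C" and bal: "balanced n C"
    and sub: "\<And>u. u \<in> C \<Longrightarrow> supp n u \<subseteq> {..<n}"
  shows "n * (n - 1) = (\<Sum>u\<in>C. card (supp n u) * (card (supp n u) - 1))"
proof -
  define P where "P u = {(i,j). i \<in> supp n u \<and> j \<in> supp n u \<and> i \<noteq> j}" for u
  have E: "{(i,j). i \<in> {..<n} \<and> j \<in> {..<n} \<and> i \<noteq> j} = (\<Union>u\<in>C. P u)"
  proof
    show "(\<Union>u\<in>C. P u) \<subseteq> {(i,j). i \<in> {..<n} \<and> j \<in> {..<n} \<and> i \<noteq> j}"
      using sub unfolding P_def by blast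
    show "{(i,j). i \<in> {..<n} \<and> j \<in> {..<n} \<and> i \<noteq> j} \<subseteq> (\<Union>u\<in>C. P u)"
    proof clarsimp
      fix i j assume "i < n" "j < n" "i \<noteq> j"
      then obtain u where "u \<in> C" "{i,j} \<subseteq> supp n u" using bal unfolding balanced_def by blast
      then show "\<exists>u\<in>C. (i, j) \<in> P u" using \<open>i \<noteq> j\<close> unfolding P_def by auto
    qed
  qed
  have disj: "\<forall>u\<in>C. \<forall>v\<in>C. u \<noteq> v \<longrightarrow> P u \<inter> P v = {}"
  proof (intro ballI impI)
    fix u v assume uv: "u \<in> C" "v \<in> C" "u \<noteq> v"
    show "P u \<inter> P v = {}"
    proof (rule ccontr)
      assume "P u \<inter> P v \<noteq> {}"
      then obtain i j where ij: "(i,j) \<in> P u" "(i,j) \<in> P v" by auto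
      then have "i < n" "j < n" "i \<noteq> j" using sub uv unfolding P_def by auto
      then have "\<exists>!u. u \<in> C \<and> {i, j} \<subseteq> supp n u" using bal unfolding balanced_def by blast
      moreover have "{i,j} \<subseteq> supp n u" "{i,j} \<subseteq> supp n v" using ij unfolding P_def by auto
      ultimately show False using uv by blast
    qed
  qed
  have finP: "\<forall>u\<in>C. finite (P u)"
  proof
    fix u assume "u \<in> C"
    have "P u \<subseteq> supp n u \<times> supp n u" unfolding P_def by auto
    moreover have "finite (supp n u)" unfolding supp_def by auto
    ultimately show "finite (P u)" by (meson finite_SigmaI finite_subset)
  qed
  have "n * (n - 1) = card {(i,j). i \<in> {..<n} \<and> j \<in> {..<n} \<and> i \<noteq> j}"
    using card_offdiag[of "{..<n}"] by simp
  also have "\<dots> = (\<Sum>u\<in>C. card (P u))" unfolding E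
    by (rule card_UN_disjoint[OF fin]) (use finP disj in auto)
  also have "\<dots> = (\<Sum>u\<in>C. card (supp n u) * (card (supp n u) - 1))"
    unfolding P_def by (rule sum.cong[OF refl], rule card_offdiag) (simp add: supp_def)
  finally show ?thesis .
qed

lemma supp_card:
  assumes "ternary_word n u"
  shows "card (supp n u) = card {i. i < n \<and> u i = 1} + card {i. i < n \<and> u i = 2}"
proof -
  have "supp n u = {i. i < n \<and> u i = 1} \<union> {i. i < n \<and> u i = 2}"
  proof -
    have "\<forall>i<n. u i \<noteq> 0 \<longleftrightarrow> u i = 1 \<or> u i = 2"
      using assms unfolding ternary_word_def by force
    then show ?thesis unfolding supp_def by auto
  qed
  moreover have "{i. i < n \<and> u i = 1} \<inter> {i. i < n \<and> u i = 2} = {}" by auto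
  ultimately show ?thesis by (simp add: card_Un_disjoint)
qed

theorem lemma4:
  fixes n w :: nat and C :: "(nat \<Rightarrow> nat) set"
  assumes "w \<ge> 2" and "n > 0"
    and "[int n = 1] (mod (int w - 1))"
    and "\<exists>k::int. 0 \<le> k \<and> real_of_int k \<le> (real w - 3) / 2 \<and>
           [int n * (int n - 1) - int n * (int w - 1) * (int w - 2)
              = (2 * k + 1) * (int w - 1)] (mod (int w * (int w - 1)))"
    and "finite C"
    and "ternary_code n (2 * w - 2) w C"
    and "balanced n C"
    and "int (card C) =
           \<lfloor>real n * (real n - 1 - (real w - 1) * (real w - 2)) / (real w * (real w - 1))\<rfloor>
           + int n"
  shows "\<exists>u\<in>C. \<not> has_type n w 0 u \<and> \<not> has_type n (w - 2) 1 u"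
proof (rule ccontr)
  assume "\<not> ?thesis"
  then have ty: "\<And>u. u \<in> C \<Longrightarrow> has_type n w 0 u \<or> has_type n (w - 2) 1 u" by blast
  have tw: "\<And>u. u \<in> C \<Longrightarrow> ternary_word n u" using assms(6) unfolding ternary_code_def by blast
  define S where "S = {u \<in> C. has_type n (w - 2) 1 u}"
  define b where "b = card S"
  have SC: "S \<subseteq> C" unfolding S_def by auto
  have finS: "finite S" using SC assms(5) finite_subset by blast
  have sS: "\<And>u. u \<in> S \<Longrightarrow> card (supp n u) = w - 1"
    using tw assms(1) unfolding S_def has_type_def by (auto simp: supp_card)
  have sC: "card (supp n u) = w" if "u \<in> C - S" for u
  proof -
    have "has_type n w 0 u" using ty that unfolding S_def by auto
    then show ?thesis using tw that by (simp add: supp_card has_type_def)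
  qed
  have "n * (n - 1) = (\<Sum>u\<in>C. card (supp n u) * (card (supp n u) - 1))"
    by (rule count_pairs[OF assms(5) assms(7)]) (auto simp: supp_def)
  also have "\<dots> = (\<Sum>u\<in>S. card (supp n u) * (card (supp n u) - 1))
      + (\<Sum>u\<in>C - S. card (supp n u) * (card (supp n u) - 1))"
    using sum.subset_diff[OF SC assms(5)] by (simp add: add.commute)
  also have "\<dots> = b * ((w - 1) * (w - 2)) + (card C - b) * (w * (w - 1))"
    using sS sC SC assms(5) by (simp add: b_def card_Diff_subset[OF finS SC] diff_diff_add numeral_2_eq_2)
  finally have cnt: "n * (n - 1) = b * ((w - 1) * (w - 2)) + (card C - b) * (w * (w - 1))" .
  have bC: "b \<le> card C" unfolding b_def using SC assms(5) card_mono by blast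
  define N where "N = card C"
  define W where "W = int w"
  have W2: "W \<ge> 2" using assms(1) W_def by simp
  have cntI: "int n * (int n - 1) = int b * ((W - 1) * (W - 2)) + (int N - int b) * (W * (W - 1))"
  proof -
    have "int (n * (n - 1)) = int (b * ((w - 1) * (w - 2)) + (card C - b) * (w * (w - 1)))"
      using cnt by simp
    then show ?thesis using assms(1,2) bC unfolding W_def N_def
      by (simp add: of_nat_diff of_nat_mult)
  qed
  obtain k :: int where k: "0 \<le> k" "real_of_int k \<le> (real w - 3) / 2"
    "[int n * (int n - 1) - int n * (int w - 1) * (int w - 2)
              = (2 * k + 1) * (int w - 1)] (mod (int w * (int w - 1)))"
    using assms(4) by blast
  have k2: "2 * k + 1 \<le> W - 2"
  proof -
    have "real_of_int (2 * k + 1) \<le> real w - 2" using k(2) by simp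
    then show ?thesis unfolding W_def by linarith
  qed
  define X where "X = int n * (int n - 1) - int n * (W - 1) * (W - 2)"
  obtain q where q: "X - (2 * k + 1) * (W - 1) = W * (W - 1) * q"
    using k(3) unfolding cong_iff_dvd_diff X_def W_def dvd_def by blast
  have Xq: "X = q * (W * (W - 1)) + (2 * k + 1) * (W - 1)" using q by (simp add: algebra_simps)
  have fl: "\<lfloor>real n * (real n - 1 - (real w - 1) * (real w - 2)) / (real w * (real w - 1))\<rfloor> = q"
  proof -
    have pos: "W * (W - 1) > 0" using W2 by simp
    have r: "real n * (real n - 1 - (real w - 1) * (real w - 2)) = real_of_int X"
      unfolding X_def W_def by (simp add: algebra_simps)
    have "real_of_int X / real_of_int (W * (W - 1)) = real_of_int q + real_of_int ((2 * k + 1) * (W - 1)) / real_of_int (W * (W - 1))"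
    proof -
      have D: "real_of_int (W * (W - 1)) \<noteq> 0" using pos by linarith
      have "real_of_int X = real_of_int q * real_of_int (W * (W - 1)) + real_of_int ((2 * k + 1) * (W - 1))"
        unfolding Xq by simp
      then show ?thesis using D by (simp add: add_divide_distrib)
    qed
    moreover have "0 \<le> (2 * k + 1) * (W - 1)" using k(1) W2 by simp
    moreover have "(2 * k + 1) * (W - 1) < W * (W - 1)" using k2 W2 by (intro mult_strict_right_mono) auto
    ultimately have "\<lfloor>real_of_int X / real_of_int (W * (W - 1))\<rfloor> = q"
    proof -
      assume e: "real_of_int X / real_of_int (W * (W - 1)) = real_of_int q + real_of_int ((2 * k + 1) * (W - 1)) / real_of_int (W * (W - 1))"
        and a: "0 \<le> (2 * k + 1) * (W - 1)" and b: "(2 * k + 1) * (W - 1) < W * (W - 1)"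
      have D: "real_of_int (W * (W - 1)) > 0" using pos by linarith
      have r0: "0 \<le> real_of_int ((2 * k + 1) * (W - 1)) / real_of_int (W * (W - 1))"
        using a D by (intro divide_nonneg_pos) (simp only: of_int_0_le_iff, simp)
      have r1: "real_of_int ((2 * k + 1) * (W - 1)) / real_of_int (W * (W - 1)) < 1"
        using b D by (simp only: divide_less_eq_1_pos of_int_less_iff)
      show ?thesis unfolding e by (rule floor_unique) (use r0 r1 in auto)
    qed
    moreover have "real_of_int (W * (W - 1)) = real w * (real w - 1)" unfolding W_def by simp
    ultimately show ?thesis using r by simp
  qed
  have Nq: "int N = q + int n" using assms(8) fl N_def by simp
  have "(W - 1) * (2 * int n - 2 * int b - 2 * k - 1) = 0"
    using cntI Xq Nq unfolding X_def by (simp add: algebra_simps)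
  then have "2 * int n - 2 * int b - 2 * k - 1 = 0" using W2 by simp
  then show False by presburger
qed

end
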